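(* Let $k>0$ be an integer, $q\in[0,1]$, and let $m<M_{k,q}$. Let $h=h(n)$ satisfy $h(n)>2\,\mathbb{E}[X_{n,M_{k,q}}(k)]$. Then $$\Pr\left[X_{n,m}(k)<h^{-1}\cdot\mathbb{E}[X_{n,m}(k)]\right]\leq 2q.$$
   Context: $G^*(n,m)$ is the random graph on $n$ vertices obtained by inserting $m$ edges, each choosing its two endpoints uniformly at random with replacement, then deleting self-loops and replacing multiple edges by single edges. $X_{n,m}(k)=|\mathcal{S}_k(G^*(n,m))|$ is the number of independent sets of size exactly $k$ in $G^*(n,m)$, and $M_{k,q}=\max\{m\in\mathbb{N}:\Pr[X_{n,m}(k)>0]\geq1-q\}$. *)

theory Defs
  imports "HOL-Probability.Probability"
begin

definition edge_lists :: "nat \<Rightarrow> nat \<Rightarrow> (nat \<times> nat) list set" where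
  "edge_lists n m = {xs. set xs \<subseteq> {..<n} \<times> {..<n} \<and> length xs = m}"

text \<open>Delete self-loops, merge multiple edges.\<close>
definition edges_of :: "(nat \<times> nat) list \<Rightarrow> nat set set" where
  "edges_of xs = {{u, v} | u v. (u, v) \<in> set xs \<and> u \<noteq> v}"

text \<open>G*(n,m): m edges, each with both endpoints uniform (with replacement).\<close>
definition Gstar :: "nat \<Rightarrow> nat \<Rightarrow> nat set set pmf" where
  "Gstar n m = map_pmf edges_of (pmf_of_set (edge_lists n m))"

definition indep_sets :: "nat \<Rightarrow> nat set set \<Rightarrow> nat \<Rightarrow> nat set set" where
  "indep_sets n E k = {S. S \<subseteq> {..<n} \<and> card S = k \<and> (\<forall>u\<in>S. \<forall>v\<in>S. {u, v} \<notin> E)}"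

definition Xk :: "nat \<Rightarrow> nat \<Rightarrow> nat set set \<Rightarrow> real" where
  "Xk n k E = real (card (indep_sets n E k))"

definition EXk :: "nat \<Rightarrow> nat \<Rightarrow> nat \<Rightarrow> real" where
  "EXk n m k = measure_pmf.expectation (Gstar n m) (Xk n k)"

definition good_m :: "nat \<Rightarrow> nat \<Rightarrow> real \<Rightarrow> nat \<Rightarrow> bool" where
  "good_m n k q m \<longleftrightarrow> measure_pmf.prob (Gstar n m) {E. Xk n k E > 0} \<ge> 1 - q"

definition Mkq :: "nat \<Rightarrow> nat \<Rightarrow> real \<Rightarrow> nat" where
  "Mkq n k q = (GREATEST m. good_m n k q m)"

end

theory Submission imports Defs begin

lemma L_finite: "finite (edge_lists n j)"
  unfolding edge_lists_def by (rule finite_lists_length_eq) auto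

lemma L_card: "card (edge_lists n j) = (n*n)^j"
  unfolding edge_lists_def using card_lists_length_eq[of "{..<n} \<times> {..<n}" j] by simp

lemma L_ne: "0 < n \<Longrightarrow> edge_lists n j \<noteq> {}"
  using L_card[of n j] by (metis card.empty nat_0_less_mult_iff power_not_zero less_not_refl2)

lemma prob_Gstar: assumes "0 < n"
  shows "measure_pmf.prob (Gstar n j) {E. P E} =
     (\<Sum>xs\<in>edge_lists n j. if P (edges_of xs) then 1 else 0) / real (card (edge_lists n j))"
proof -
  have "measure_pmf.prob (Gstar n j) {E. P E} = real (card (edge_lists n j \<inter> {xs. P (edges_of xs)})) / card (edge_lists n j)"
    unfolding Gstar_def using measure_pmf_of_set[OF L_ne[OF assms] L_finite] by (simp add: vimage_def)
  also have "card (edge_lists n j \<inter> {xs. P (edges_of xs)}) = card {xs\<in>edge_lists n j. P (edges_of xs)}"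
    by (metis Collect_conj_eq Collect_mem_eq)
  also have "real \<dots> = (\<Sum>xs\<in>edge_lists n j. if P (edges_of xs) then 1 else 0)"
    using L_finite by (simp add: sum.If_cases Int_def)
  finally show ?thesis .
qed

lemma EX_Gstar: assumes "0 < n"
  shows "EXk n j k = (\<Sum>xs\<in>edge_lists n j. Xk n k (edges_of xs)) / real (card (edge_lists n j))"
  unfolding EXk_def Gstar_def using integral_pmf_of_set[OF L_ne[OF assms] L_finite] by simp

lemma edges_append: "edges_of (xs @ ys) = edges_of xs \<union> edges_of ys"
  unfolding edges_of_def by auto

lemma indep_union: "indep_sets n (A \<union> B) k = indep_sets n A k \<inter> indep_sets n B k"
  unfolding indep_sets_def by auto

lemma finite_indep: "finite (indep_sets n E k)"
  by (rule finite_subset[of _ "Pow {..<n}"]) (auto simp: indep_sets_def)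

lemma sum_append:
  fixes g :: "_ \<Rightarrow> real"
  shows "(\<Sum>zs\<in>edge_lists n (m+d). g zs) = (\<Sum>xs\<in>edge_lists n m. \<Sum>ys\<in>edge_lists n d. g (xs @ ys))"
proof -
  have img: "edge_lists n (m+d) = (\<lambda>(xs,ys). xs @ ys) ` (edge_lists n m \<times> edge_lists n d)"
  proof
    show "edge_lists n (m+d) \<subseteq> (\<lambda>(xs,ys). xs @ ys) ` (edge_lists n m \<times> edge_lists n d)"
    proof
      fix zs assume z: "zs \<in> edge_lists n (m+d)"
      hence "(take m zs, drop m zs) \<in> edge_lists n m \<times> edge_lists n d"
        unfolding edge_lists_def using set_take_subset set_drop_subset by fastforce
      thus "zs \<in> (\<lambda>(xs,ys). xs @ ys) ` (edge_lists n m \<times> edge_lists n d)"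
        by (metis (no_types, lifting) append_take_drop_id case_prod_conv image_eqI)
    qed
  qed (auto simp: edge_lists_def)
  have inj: "inj_on (\<lambda>(xs,ys). xs @ ys) (edge_lists n m \<times> edge_lists n d)"
    by (auto simp: inj_on_def edge_lists_def)
  show ?thesis
    unfolding img sum.reindex[OF inj] sum.cartesian_product by (simp add: case_prod_beta)
qed

lemma indep_iff:
  assumes "S \<subseteq> {..<n}" "card S = k"
  shows "S \<in> indep_sets n (edges_of ys) k \<longleftrightarrow> (\<forall>(u,v)\<in>set ys. \<not> (u \<in> S \<and> v \<in> S \<and> u \<noteq> v))"
proof
  assume "S \<in> indep_sets n (edges_of ys) k"
  thus "\<forall>(u,v)\<in>set ys. \<not> (u \<in> S \<and> v \<in> S \<and> u \<noteq> v)"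
    unfolding indep_sets_def edges_of_def by blast
next
  assume h: "\<forall>(u,v)\<in>set ys. \<not> (u \<in> S \<and> v \<in> S \<and> u \<noteq> v)"
  have "{u, v} \<notin> edges_of ys" if "u \<in> S" "v \<in> S" for u v
  proof
    assume "{u, v} \<in> edges_of ys"
    then obtain a b where ab: "{u,v} = {a,b}" "(a,b) \<in> set ys" "a \<noteq> b"
      unfolding edges_of_def by blast
    have "a \<in> S" "b \<in> S" using ab(1) that by (auto simp: doubleton_eq_iff)
    thus False using h ab by blast
  qed
  thus "S \<in> indep_sets n (edges_of ys) k" using assms unfolding indep_sets_def by blast
qed

lemma count_S:
  assumes "S \<subseteq> {..<n}" "card S = k"
  shows "card {ys\<in>edge_lists n d. S \<in> indep_sets n (edges_of ys) k} = (n*n - (k*k - k))^d"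
proof -
  define Off where "Off = {(u,v). u \<in> S \<and> v \<in> S \<and> u \<noteq> v}"
  define B where "B = ({..<n} \<times> {..<n}) - Off"
  have fS: "finite S" using assms(1) finite_subset by blast
  have "{ys\<in>edge_lists n d. S \<in> indep_sets n (edges_of ys) k} = {ys. set ys \<subseteq> B \<and> length ys = d}"
    unfolding indep_iff[OF assms] B_def Off_def edge_lists_def by auto
  hence c: "card {ys\<in>edge_lists n d. S \<in> indep_sets n (edges_of ys) k} = card B ^ d"
    using card_lists_length_eq[of B d] unfolding B_def by simp
  have "Off = S \<times> S - (\<lambda>u. (u,u)) ` S" unfolding Off_def by auto
  moreover have "card ((\<lambda>u. (u,u)) ` S) = k" using assms(2) by (simp add: card_image inj_on_def)
  moreover have "(\<lambda>u. (u,u)) ` S \<subseteq> S \<times> S" by auto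
  ultimately have cO: "card Off = k*k - k"
    using assms fS by (simp add: card_Diff_subset finite_subset card_cartesian_product)
  have "Off \<subseteq> {..<n} \<times> {..<n}" using assms(1) unfolding Off_def by auto
  hence "card B = n*n - (k*k-k)" unfolding B_def using cO
    by (subst card_Diff_subset) (auto intro: finite_subset)
  thus ?thesis using c by simp
qed

lemma S2:
  "(\<Sum>ys\<in>edge_lists n d. real (card (indep_sets n (edges_of (xs @ ys)) k)))
    = real (card (indep_sets n (edges_of xs) k)) * real ((n*n - (k*k - k))^d)"
proof -
  let ?I = "\<lambda>xs. indep_sets n (edges_of xs) k"
  have "(\<Sum>ys\<in>edge_lists n d. real (card (?I (xs @ ys))))
      = (\<Sum>ys\<in>edge_lists n d. \<Sum>S\<in>?I xs. if S \<in> ?I ys then 1 else 0)"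
  proof (rule sum.cong[OF refl])
    fix ys
    have "?I (xs @ ys) = ?I xs \<inter> ?I ys" by (simp add: edges_append indep_union)
    thus "real (card (?I (xs @ ys))) = (\<Sum>S\<in>?I xs. if S \<in> ?I ys then 1 else 0)"
      using finite_indep[of n "edges_of xs" k] by (simp add: sum.If_cases Int_commute)
  qed
  also have "\<dots> = (\<Sum>S\<in>?I xs. \<Sum>ys\<in>edge_lists n d. if S \<in> ?I ys then 1 else 0)"
    by (rule sum.swap)
  also have "\<dots> = (\<Sum>S\<in>?I xs. real ((n*n - (k*k - k))^d))"
  proof (rule sum.cong[OF refl])
    fix S assume "S \<in> ?I xs"
    hence S: "S \<subseteq> {..<n}" "card S = k" unfolding indep_sets_def by auto
    have "(\<Sum>ys\<in>edge_lists n d. if S \<in> ?I ys then 1 else 0) = real (card {ys\<in>edge_lists n d. S \<in> ?I ys})"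
      using L_finite[of n d] by (simp add: sum.If_cases Int_def)
    thus "(\<Sum>ys\<in>edge_lists n d. if S \<in> ?I ys then 1 else (0::real)) = real ((n*n - (k*k - k))^d)"
      using count_S[OF S] by simp
  qed
  also have "\<dots> = real (card (?I xs)) * real ((n*n - (k*k - k))^d)" by simp
  finally show ?thesis .
qed

lemma S3:
  "(\<Sum>ys\<in>edge_lists n d. if Xk n k (edges_of (xs @ ys)) = 0 then 1 else 0)
    \<ge> real (card (edge_lists n d)) - real (card (indep_sets n (edges_of xs) k)) * real ((n*n - (k*k - k))^d)"
proof -
  have "(\<Sum>ys\<in>edge_lists n d. if Xk n k (edges_of (xs @ ys)) = 0 then 1 else 0)
     \<ge> (\<Sum>ys\<in>edge_lists n d. 1 - real (card (indep_sets n (edges_of (xs @ ys)) k)))"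
    by (rule sum_mono) (auto simp: Xk_def)
  also have "(\<Sum>ys\<in>edge_lists n d. 1 - real (card (indep_sets n (edges_of (xs @ ys)) k)))
     = real (card (edge_lists n d)) - real (card (indep_sets n (edges_of xs) k)) * real ((n*n - (k*k - k))^d)"
    by (simp add: sum_subtractf S2)
  finally show ?thesis .
qed

theorem lemma4p3:
  fixes n k m :: nat and q h :: real
  assumes "0 < n"
    and "0 < k"
    and "0 \<le> q" and "q \<le> 1"
    and "\<exists>M. good_m n k q M \<and> (\<forall>m'. good_m n k q m' \<longrightarrow> m' \<le> M)"
    and "m < Mkq n k q"
    and "h > 2 * EXk n (Mkq n k q) k"
  shows "measure_pmf.prob (Gstar n m) {E. Xk n k E < EXk n m k / h} \<le> 2 * q"
proof -
  define M where "M = Mkq n k q"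
  define d where "d = M - m"
  have Md: "M = m + d" using assms(6) unfolding d_def M_def by simp
  have goodM: "good_m n k q M"
    unfolding M_def Mkq_def using assms(5) by (metis (mono_tags, lifting) GreatestI_nat)
  define I where "I = (\<lambda>xs. real (card (indep_sets n (edges_of xs) k)))"
  define C where "C = real ((n*n - (k*k - k))^d)"
  define Nm where "Nm = real (card (edge_lists n m))"
  define Nd where "Nd = real (card (edge_lists n d))"
  have NM: "real (card (edge_lists n M)) = Nm * Nd"
    unfolding Nm_def Nd_def Md L_card by (simp add: power_add)
  have Nmpos: "Nm > 0" unfolding Nm_def L_card using assms(1) by simp
  have Ndpos: "Nd > 0" unfolding Nd_def L_card using assms(1) by simp
  have C0: "C \<ge> 0" unfolding C_def by simp
  define Em where "Em = EXk n m k"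
  have Em: "Em = (\<Sum>xs\<in>edge_lists n m. I xs) / Nm"
    unfolding Em_def EX_Gstar[OF assms(1)] Nm_def I_def Xk_def ..
  have EM: "EXk n M k = C / Nd * Em"
  proof -
    have "EXk n M k = (\<Sum>xs\<in>edge_lists n m. \<Sum>ys\<in>edge_lists n d. I (xs @ ys)) / (Nm * Nd)"
      unfolding EX_Gstar[OF assms(1)] NM[symmetric] unfolding Md sum_append I_def Xk_def ..
    also have "\<dots> = (\<Sum>xs\<in>edge_lists n m. I xs * C) / (Nm * Nd)"
      unfolding I_def C_def S2 ..
    also have "\<dots> = C / Nd * Em" unfolding Em sum_distrib_right[symmetric] by (simp add: mult.commute)
    finally show ?thesis .
  qed
  have hpos: "h > 0"
  proof -
    have "Em \<ge> 0" unfolding Em I_def using Nmpos by (simp add: sum_nonneg)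
    hence "EXk n M k \<ge> 0" unfolding EM using C0 Ndpos by simp
    thus ?thesis using assms(7) unfolding M_def by simp
  qed
  define A where "A = (\<lambda>xs. Xk n k (edges_of xs) < Em / h)"
  define Z where "Z = (\<lambda>xs. (\<Sum>ys\<in>edge_lists n d. if Xk n k (edges_of (xs @ ys)) = 0 then 1 else (0::real)))"
  have ZA: "Z xs \<ge> Nd / 2" if "A xs" for xs
  proof -
    have "Z xs \<ge> Nd - I xs * C" unfolding Z_def Nd_def I_def C_def by (rule S3)
    moreover have "I xs * C \<le> Nd / 2"
    proof -
      have "I xs < Em / h" using that unfolding A_def I_def Xk_def .
      hence "I xs * C \<le> Em / h * C" using C0 by (intro mult_right_mono) auto
      moreover have "2 * (Em * C) \<le> h * Nd"
        using assms(7) unfolding M_def[symmetric] EM using Ndpos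
        by (simp add: field_simps)
      hence "Em / h * C \<le> Nd / 2" using hpos by (simp add: field_simps)
      ultimately show ?thesis by linarith
    qed
    ultimately show ?thesis by linarith
  qed
  have Z0: "Z xs \<ge> 0" for xs unfolding Z_def by (simp add: sum_nonneg)
  have pA: "measure_pmf.prob (Gstar n m) {E. Xk n k E < EXk n m k / h}
      = (\<Sum>xs\<in>edge_lists n m. if A xs then 1 else 0) / Nm"
    unfolding prob_Gstar[OF assms(1)] A_def Em_def Nm_def ..
  have sumZ: "(\<Sum>xs\<in>edge_lists n m. if A xs then 1 else 0) * (Nd / 2) \<le> (\<Sum>xs\<in>edge_lists n m. Z xs)"
    unfolding sum_distrib_right by (rule sum_mono) (use ZA Z0 in auto)
  have p0: "measure_pmf.prob (Gstar n M) {E. Xk n k E > 0}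
      = 1 - (\<Sum>xs\<in>edge_lists n m. Z xs) / (Nm * Nd)"
  proof -
    have "measure_pmf.prob (Gstar n M) {E. Xk n k E > 0}
       = (\<Sum>zs\<in>edge_lists n M. 1 - (if Xk n k (edges_of zs) = 0 then 1 else 0)) / (Nm * Nd)"
      unfolding prob_Gstar[OF assms(1)] NM
      by (rule arg_cong[where f="\<lambda>x. x / (Nm*Nd)"], rule sum.cong) (auto simp: Xk_def)
    also have "\<dots> = (Nm * Nd - (\<Sum>zs\<in>edge_lists n M. (if Xk n k (edges_of zs) = 0 then 1 else 0))) / (Nm * Nd)"
      by (simp add: sum_subtractf NM)
    also have "\<dots> = 1 - (\<Sum>xs\<in>edge_lists n m. Z xs) / (Nm * Nd)"
      unfolding Z_def Md sum_append using Nmpos Ndpos by (simp add: field_simps)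
    finally show ?thesis .
  qed
  have "(\<Sum>xs\<in>edge_lists n m. Z xs) / (Nm * Nd) \<le> q"
    using goodM p0 unfolding good_m_def by simp
  hence "(\<Sum>xs\<in>edge_lists n m. if A xs then 1 else 0) * (Nd / 2) / (Nm * Nd) \<le> q"
    using sumZ Nmpos Ndpos by (meson divide_right_mono order_trans mult_pos_pos less_imp_le)
  thus ?thesis unfolding pA using Ndpos Nmpos by (simp add: field_simps)
qed

end
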